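(* Let $h$ be a positive integer, let $S$ be an arbitrary set of positive integers, and let $S'=\mathbb{N}_+\setminus\{mh\mid m\in\mathbb{N}_+\setminus S\}$. Then for every integer $n\ge 0$, $$G_{S'}(n)=G_S\left(\left\lfloor\frac{n}{h}\right\rfloor\right)h+(n\bmod h).$$
   Context: $\mathbb{N}_+$ denotes the set of positive integers. For a finite set $T$ of non-negative integers, $\mathrm{mex}\,T$ is the least non-negative integer not in $T$. For a set $S$ of positive integers, $\mathrm{Subtraction}(S)$ is the impartial normal-play game on a single heap, where a move takes a heap of $x$ tokens to a heap of $x-s$ tokens for some $s\in S$ with $s\le x$. Its $\mathcal{G}$-value sequence $G_S$ is defined recursively by $G_S(x)=\mathrm{mex}\{G_S(x-s)\mid s\in S,\ s\le x\}$ for $x=0,1,2,\ldots$. *)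

theory Defs
  imports Main
begin

definition mex :: "nat set \<Rightarrow> nat" where
  "mex T = (LEAST k. k \<notin> T)"

text \<open>G-value sequence of Subtraction(S), S a set of positive integers.
  Only elements s with 1 \<le> s \<le> x are allowed moves from heap x.\<close>
function G :: "nat set \<Rightarrow> nat \<Rightarrow> nat" where
  "G S x = mex ((\<lambda>s. G S (x - s)) ` {s \<in> S. 0 < s \<and> s \<le> x})"
  by auto
termination
  by (relation "measure (\<lambda>(S, x). x)") auto

end

theory Submission
  imports Defs
begin

lemma mex_eqI: "v \<notin> T \<Longrightarrow> (\<forall>w<v. w \<in> T) \<Longrightarrow> mex T = v"
  unfolding mex_def by (rule Least_equality) (auto simp: not_less[symmetric])

lemma mex_notin: "finite T \<Longrightarrow> mex T \<notin> T"
  unfolding mex_def by (metis LeastI_ex ex_new_if_finite infinite_UNIV_nat)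

lemma mex_less: "w < mex T \<Longrightarrow> w \<in> T"
  unfolding mex_def using not_less_Least by blast

declare G.simps[simp del]

lemma G_unfold: "G S x = mex ((\<lambda>s. G S (x - s)) ` {s \<in> S. 0 < s \<and> s \<le> x})"
  by (rule G.simps)

lemma G_ne: assumes "m \<in> S" "0 < m" "m \<le> q" shows "G S (q - m) \<noteq> G S q"
proof -
  let ?T = "(\<lambda>s. G S (q - s)) ` {s \<in> S. 0 < s \<and> s \<le> q}"
  have "finite ?T" by simp
  hence "G S q \<notin> ?T" by (subst G_unfold) (rule mex_notin)
  moreover have "G S (q - m) \<in> ?T" using assms by blast
  ultimately show ?thesis by metis
qed

lemma G_reach: assumes "a < G S q" shows "\<exists>m\<in>S. 0 < m \<and> m \<le> q \<and> G S (q - m) = a"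
proof -
  let ?T = "(\<lambda>s. G S (q - s)) ` {s \<in> S. 0 < s \<and> s \<le> q}"
  have "a < mex ?T" using assms by (subst (asm) G_unfold)
  hence "a \<in> ?T" by (rule mex_less)
  thus ?thesis by auto
qed

theorem theorem2p2:
  fixes h :: nat and S :: "nat set" and n :: nat
  assumes "0 < h"
    and "\<forall>s\<in>S. 0 < s"
  shows "G ({k. 0 < k} - {m * h | m. 0 < m \<and> m \<notin> S}) n
           = G S (n div h) * h + n mod h"
proof (induction n rule: less_induct)
  case (less n)
  define S2 where "S2 = {k. 0 < k} - {m * h | m. 0 < m \<and> m \<notin> S}"
  have IH: "\<And>y. y < n \<Longrightarrow> G S2 y = G S (y div h) * h + y mod h" using less S2_def by simp
  define q where "q = n div h"
  define r where "r = n mod h"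
  have n: "n = q * h + r" unfolding q_def r_def by simp
  have rh: "r < h" unfolding r_def using assms(1) by simp
  let ?T = "(\<lambda>s. G S2 (n - s)) ` {s \<in> S2. 0 < s \<and> s \<le> n}"
  have "mex ?T = G S q * h + r"
  proof (rule mex_eqI)
    show "G S q * h + r \<notin> ?T"
    proof
      assume "G S q * h + r \<in> ?T"
      then obtain s where s: "s \<in> S2" "0 < s" "s \<le> n" and e: "G S2 (n - s) = G S q * h + r" by auto
      have e2: "G S ((n - s) div h) * h + (n - s) mod h = G S q * h + r" using IH[of "n - s"] s e by simp
      have "(G S ((n - s) div h) * h + (n - s) mod h) mod h = (G S q * h + r) mod h" using e2 by simp
      hence md: "(n - s) mod h = r" using rh by simp
      have "h dvd s"
        using mod_eq_dvd_iff_nat[of "n - s" n h] md s(3) r_def by simp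
      then obtain m where m: "s = m * h" by (metis dvdE mult.commute)
      have m0: "0 < m" using m s by simp
      have mS: "m \<in> S" using s m m0 unfolding S2_def by auto
      have "m * h < (q + 1) * h" using s(3) m n rh by simp
      hence "m < q + 1" using mult_less_cancel2 by blast
      hence mq: "m \<le> q" by simp
      have "n - s = (q - m) * h + r" using n m mq by (simp add: diff_mult_distrib)
      hence "(n - s) div h = q - m" using rh by simp
      hence "G S (q - m) * h = G S q * h" using e2 md by simp
      hence "G S (q - m) = G S q" using assms(1) by simp
      thus False using G_ne[OF mS m0 mq] by simp
    qed
    show "\<forall>w<G S q * h + r. w \<in> ?T"
    proof (intro allI impI)
      fix w assume w: "w < G S q * h + r"
      define a where "a = w div h"
      define b where "b = w mod h"
      have wab: "w = a * h + b" unfolding a_def b_def by simp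
      have bh: "b < h" unfolding b_def using assms(1) by simp
      show "w \<in> ?T"
      proof (cases "a < G S q")
        case True
        then obtain m where m: "m \<in> S" "0 < m" "m \<le> q" "G S (q - m) = a" using G_reach by blast
        define t where "t = (q - m) * h + b"
        have tn: "t < n" proof -
          have "t < (q - m) * h + h" using bh t_def by simp
          also have "\<dots> = (q - m + 1) * h" by simp
          also have "\<dots> \<le> q * h" using m by (intro mult_le_mono1) simp
          finally show ?thesis using n by simp
        qed
        have Gt: "G S2 t = w" using IH[OF tn] unfolding t_def using bh m wab by simp
        define s where "s = n - t"
        have s0: "0 < s" "s \<le> n" using tn s_def by auto
        have "s \<in> S2"
        proof (cases "b = r")
          case True
          have "m * h \<le> q * h" using m by simp
          have "(q - m) * h + m * h = q * h" using m(3) by (simp add: add_mult_distrib[symmetric])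
          hence "t + m * h = n" using n True unfolding t_def by simp
          hence "s = m * h" unfolding s_def by simp
          thus ?thesis using m(1) s0 unfolding S2_def by auto
        next
          case False
          have "\<not> h dvd s"
          proof
            assume "h dvd s"
            have "n = s + t" using s_def tn by simp
            hence "n mod h = t mod h" using \<open>h dvd s\<close> by (simp add: mod_add_left_eq[symmetric])
            hence "r = b" unfolding t_def r_def using bh by simp
            thus False using False by simp
          qed
          thus ?thesis using s0 unfolding S2_def by auto
        qed
        thus "w \<in> ?T" using s0 Gt s_def tn by (auto intro!: image_eqI[where x = s])
      next
        case False
        have "a * h < (G S q + 1) * h" using w wab rh by simp
        hence "a < G S q + 1" using mult_less_cancel2 by blast
        hence aq: "a = G S q" using False by simp
        hence br: "b < r" using w wab by simp
        define t where "t = q * h + b"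
        have tn: "t < n" using n br t_def by simp
        have Gt: "G S2 t = w" using IH[OF tn] unfolding t_def using bh aq wab by simp
        define s where "s = n - t"
        have s: "s = r - b" using s_def n t_def by simp
        have "s < h" "0 < s" using s br rh by auto
        hence "\<not> h dvd s" using dvd_imp_le not_less by blast
        hence "s \<in> S2" using s br unfolding S2_def by auto
        thus "w \<in> ?T" using Gt s_def tn by (auto intro!: image_eqI[where x = s])
      qed
    qed
  qed
  thus ?case unfolding S2_def q_def r_def by (subst G_unfold) simp
qed

end
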